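(* Let $\varphi$ be a DBI normal formula and $i\in\mathcal{A}$. (1) Suppose $\varphi=\bigwedge_{j\in G}B_j\omega_j$ with $\varnothing\ne G\subseteq\mathcal{A}$, and either $i\notin G$, or $i\in G$ and $\omega_i=\bigwedge_{j\in H}B_j\pi_j$ has no propositional component. Then for every pointed Kripke model $(\mathcal{M},v)$: $\mathcal{M},v\nvDash B_i\bot$ iff $\mathcal{M}\odot\mathcal{U}_\varphi,(v,0)\nvDash B_i\bot$. (2) Suppose $\varphi=B_i\bigl(\xi\wedge\bigwedge_{k\in H}B_k\pi_k\bigr)\wedge\bigwedge_{j\in G}B_j\omega_j$ where $i\notin G$ and $\xi$ is purely propositional. Then for every pointed Kripke model $(\mathcal{M},v)$: $\mathcal{M},v\vDash\widehat{B}_i\xi$ iff $\mathcal{M}\odot\mathcal{U}_\varphi,(v,0)\nvDash B_i\bot$.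
   Context: Agents $\mathcal{A}=\{1,\dots,n\}$, $n>1$; language $\mathcal{L}$: $\varphi ::= p \mid \neg\varphi \mid (\varphi\wedge\varphi)\mid B_i\varphi$, with $\top,\bot$ as usual and $\widehat{B}_i\varphi:=\neg B_i\neg\varphi$. Kripke model $\mathcal{M}=\langle S,R,V\rangle$ (nonempty $S$, $R_i\subseteq S\times S$, $V:\mathit{Prop}\to 2^S$), standard truth. Action model $\mathcal{U}=\langle E,Q,\mathsf{pre}\rangle$ (nonempty $E$, $Q_i\subseteq E\times E$, $\mathsf{pre}:E\to\mathcal{L}$). Pointed update of $(\mathcal{M},w)$ with $(\mathcal{U},\alpha)$, defined iff $\mathcal{M},w\vDash\mathsf{pre}(\alpha)$: with $T=\{(x,\beta)\in S\times E\mid\mathcal{M},x\vDash\mathsf{pre}(\beta)\}$, $\mathcal{M}\odot\mathcal{U}=\langle S^{\mathcal U},R^{\mathcal U},V^{\mathcal U}\rangle$ where $S^{\mathcal U}$ is the smallest subset of $T$ containing $(w,\alpha)$ closed under: $(x,\beta)\in S^{\mathcal U}$, $(u,\gamma)\in T$, $xR_iu$, $\beta Q_i\gamma$ imply $(u,\gamma)\in S^{\mathcal U}$; $R^{\mathcal U}_i$ relates $(x,\beta),(u,\gamma)\in S^{\mathcal U}$ iff $xR_iu$ and $\beta Q_i\gamma$; $V^{\mathcal U}(p)=\{(x,\beta)\in S^{\mathcal U}\mid x\in V(p)\}$. Target agents: $\mathsf{ta}(p)=\varnothing$, $\mathsf{ta}(\neg\phi)=\mathsf{ta}(\phi)$,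 $\mathsf{ta}(\phi\wedge\psi)=\mathsf{ta}(\phi)\cup\mathsf{ta}(\psi)$, $\mathsf{ta}(B_i\phi)=\{i\}$. DBI formulas: $\varphi ::= B_i\xi \mid B_i(\xi\wedge\varphi)\mid(\varphi\wedge\varphi)\mid B_i\varphi$, $\xi$ purely propositional. DBI normal: $B_i\xi$ always; $B_i\varphi$, $B_i(\xi\wedge\varphi)$ iff $\varphi$ DBI normal and $i\notin\mathsf{ta}(\varphi)$; $\varphi\wedge\psi$ iff both DBI normal and $\mathsf{ta}(\varphi)\cap\mathsf{ta}(\psi)=\varnothing$. Action model $\mathcal{U}_\varphi=\langle E^\varphi,Q^\varphi,\mathsf{pre}^\varphi\rangle$ for DBI normal $\varphi$, recursively; always $E^\varphi=\{0,-1\}\sqcup D^\varphi$, $\varnothing\ne D^\varphi\subseteq\{1,2,\dots\}$, $\mathsf{pre}^\varphi(0)=\mathsf{pre}^\varphi(-1)=\top$; $\underline{Q}_j:=Q_j\cap((E\setminus\{0\})\times(E\setminus\{0\}))$. (1) $\varphi=B_i\xi$: $D=\{m\}$, $\mathsf{pre}(m)=\xi$, $Q_j=\{(0,-1),(m,-1),(-1,-1)\}$ ($j\ne i$), $Q_i=\{(0,m),(m,m),(-1,-1)\}$. (2) $\varphi=B_i\psi$: fresh $m\ge1$, $m\notin D^\psi$; $D^\varphi=D^\psi\sqcup\{m\}$; $\mathsf{pre}^\varphi$ extends $\mathsf{pre}^\psi$ with $\mathsf{pre}^\varphi(m)=\top$; $Q^\varphi_j=\underline{Q}^\psi_j\cup\{(0,-1)\}\cup\{(m,k)\mid(0,k)\in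 Q^\psi_j\}$ ($j\ne i$); $Q^\varphi_i=\underline{Q}^\psi_i\cup\{(0,m),(m,m)\}$. (3) $\varphi=B_i(\xi\wedge\psi)$: as (2) but $\mathsf{pre}^\varphi(m)=\xi$. (4) $\varphi=\psi\wedge\theta$: with $D^\psi\cap D^\theta=\varnothing$, $D^\varphi=D^\psi\sqcup D^\theta$, $\mathsf{pre}^\varphi=\mathsf{pre}^\psi\cup\mathsf{pre}^\theta$, $Q^\varphi_j=\underline{Q}^\psi_j\cup\underline{Q}^\theta_j\cup\{(0,k)\mid(0,k)\in Q^\psi_j\cup Q^\theta_j, k\in D^\psi\sqcup D^\theta\}\cup\{(0,-1)\mid\text{no such }k\text{ exists}\}$. *)

theory Defs
  imports Main
begin

datatype ('p, 'ag) fm =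
    Atom 'p
  | Neg "('p, 'ag) fm"
  | Conj "('p, 'ag) fm" "('p, 'ag) fm"
  | Bel 'ag "('p, 'ag) fm"

definition fBot :: "('p, 'ag) fm" where
  "fBot = Conj (Atom undefined) (Neg (Atom undefined))"

definition fTop :: "('p, 'ag) fm" where
  "fTop = Neg fBot"

definition Dia :: "'ag \<Rightarrow> ('p, 'ag) fm \<Rightarrow> ('p, 'ag) fm" where
  "Dia i \<phi> = Neg (Bel i (Neg \<phi>))"

fun propositional :: "('p, 'ag) fm \<Rightarrow> bool" where
  "propositional (Atom p) = True"
| "propositional (Neg \<phi>) = propositional \<phi>"
| "propositional (Conj \<phi> \<psi>) = (propositional \<phi> \<and> propositional \<psi>)"
| "propositional (Bel i \<phi>) = False"

fun ta :: "('p, 'ag) fm \<Rightarrow> 'ag set" where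
  "ta (Atom p) = {}"
| "ta (Neg \<phi>) = ta \<phi>"
| "ta (Conj \<phi> \<psi>) = ta \<phi> \<union> ta \<psi>"
| "ta (Bel i \<phi>) = {i}"

fun conjuncts :: "('p, 'ag) fm \<Rightarrow> ('p, 'ag) fm set" where
  "conjuncts (Conj \<phi> \<psi>) = conjuncts \<phi> \<union> conjuncts \<psi>"
| "conjuncts \<phi> = {\<phi>}"

fun is_Bel :: "('p, 'ag) fm \<Rightarrow> bool" where
  "is_Bel (Bel i \<phi>) = True"
| "is_Bel _ = False"

inductive dbi_normal :: "('p, 'ag) fm \<Rightarrow> bool" where
  dbi_prop: "propositional \<xi> \<Longrightarrow> dbi_normal (Bel i \<xi>)"
| dbi_bel: "dbi_normal \<psi> \<Longrightarrow> i \<notin> ta \<psi> \<Longrightarrow> dbi_normal (Bel i \<psi>)"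
| dbi_bel_conj: "propositional \<xi> \<Longrightarrow> dbi_normal \<psi> \<Longrightarrow> i \<notin> ta \<psi>
    \<Longrightarrow> dbi_normal (Bel i (Conj \<xi> \<psi>))"
| dbi_conj: "dbi_normal \<psi> \<Longrightarrow> dbi_normal \<theta> \<Longrightarrow> ta \<psi> \<inter> ta \<theta> = {}
    \<Longrightarrow> dbi_normal (Conj \<psi> \<theta>)"

record ('w, 'ag, 'p) kripke =
  W :: "'w set"
  Rel :: "'ag \<Rightarrow> ('w \<times> 'w) set"
  Val :: "'p \<Rightarrow> 'w set"

definition kripke_model :: "('w, 'ag, 'p) kripke \<Rightarrow> bool" where
  "kripke_model M \<longleftrightarrow> W M \<noteq> {} \<and> (\<forall>i. Rel M i \<subseteq> W M \<times> W M) \<and> (\<forall>p. Val M p \<subseteq> W M)"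

fun sat :: "('w, 'ag, 'p) kripke \<Rightarrow> 'w \<Rightarrow> ('p, 'ag) fm \<Rightarrow> bool" where
  "sat M w (Atom p) = (w \<in> Val M p)"
| "sat M w (Neg \<phi>) = (\<not> sat M w \<phi>)"
| "sat M w (Conj \<phi> \<psi>) = (sat M w \<phi> \<and> sat M w \<psi>)"
| "sat M w (Bel i \<phi>) = (\<forall>u. (w, u) \<in> Rel M i \<longrightarrow> sat M u \<phi>)"

text \<open>Events are integers (the construction of U_phi uses events 0, -1, 1, 2, ...).\<close>
record ('ag, 'p) amodel =
  Ev :: "int set"
  Acc :: "'ag \<Rightarrow> (int \<times> int) set"
  Pre :: "int \<Rightarrow> ('p, 'ag) fm"

definition Tset :: "('w, 'ag, 'p) kripke \<Rightarrow> ('ag, 'p) amodel \<Rightarrow> ('w \<times> int) set" where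
  "Tset M U = {(x, b). x \<in> W M \<and> b \<in> Ev U \<and> sat M x (Pre U b)}"

inductive_set upd_worlds :: "('w, 'ag, 'p) kripke \<Rightarrow> ('ag, 'p) amodel \<Rightarrow> 'w \<Rightarrow> int \<Rightarrow> ('w \<times> int) set"
  for M U w a where
  base: "(w, a) \<in> Tset M U \<Longrightarrow> (w, a) \<in> upd_worlds M U w a"
| step: "(x, b) \<in> upd_worlds M U w a \<Longrightarrow> (u, c) \<in> Tset M U \<Longrightarrow> (x, u) \<in> Rel M i
    \<Longrightarrow> (b, c) \<in> Acc U i \<Longrightarrow> (u, c) \<in> upd_worlds M U w a"

definition update :: "('w, 'ag, 'p) kripke \<Rightarrow> ('ag, 'p) amodel \<Rightarrow> 'w \<Rightarrow> int
    \<Rightarrow> ('w \<times> int, 'ag, 'p) kripke" where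
  "update M U w a =
     \<lparr> W = upd_worlds M U w a,
       Rel = (\<lambda>i. {((x, b), (u, c)). (x, b) \<in> upd_worlds M U w a \<and> (u, c) \<in> upd_worlds M U w a
                     \<and> (x, u) \<in> Rel M i \<and> (b, c) \<in> Acc U i}),
       Val = (\<lambda>p. {(x, b). (x, b) \<in> upd_worlds M U w a \<and> x \<in> Val M p}) \<rparr>"

definition underQ :: "(int \<times> int) set \<Rightarrow> int set \<Rightarrow> (int \<times> int) set" where
  "underQ Q E = Q \<inter> ((E - {0}) \<times> (E - {0}))"

text \<open>\<open>U_of \<phi> U\<close>: U is an action model U_phi built by the recursive construction,
  for some admissible choice of the fresh event names.  E = {0,-1} plus D.\<close>
inductive U_of :: "('p, 'ag) fm \<Rightarrow> ('ag, 'p) amodel \<Rightarrow> bool" where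
  U_prop: "propositional \<xi> \<Longrightarrow> m \<ge> 1 \<Longrightarrow>
    U_of (Bel i \<xi>)
      \<lparr> Ev = {0, -1, m},
        Acc = (\<lambda>j. if j = i then {(0, m), (m, m), (-1, -1)} else {(0, -1), (m, -1), (-1, -1)}),
        Pre = (\<lambda>e. if e = m then \<xi> else fTop) \<rparr>"
| U_bel: "U_of \<psi> U \<Longrightarrow> m \<ge> 1 \<Longrightarrow> m \<notin> Ev U \<Longrightarrow>
    U_of (Bel i \<psi>)
      \<lparr> Ev = Ev U \<union> {m},
        Acc = (\<lambda>j. if j = i then underQ (Acc U j) (Ev U) \<union> {(0, m), (m, m)}
                   else underQ (Acc U j) (Ev U) \<union> {(0, -1)} \<union> {(m, k) | k. (0, k) \<in> Acc U j}),
        Pre = (Pre U)(m := fTop) \<rparr>"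
| U_bel_conj: "propositional \<xi> \<Longrightarrow> U_of \<psi> U \<Longrightarrow> m \<ge> 1 \<Longrightarrow> m \<notin> Ev U \<Longrightarrow>
    U_of (Bel i (Conj \<xi> \<psi>))
      \<lparr> Ev = Ev U \<union> {m},
        Acc = (\<lambda>j. if j = i then underQ (Acc U j) (Ev U) \<union> {(0, m), (m, m)}
                   else underQ (Acc U j) (Ev U) \<union> {(0, -1)} \<union> {(m, k) | k. (0, k) \<in> Acc U j}),
        Pre = (Pre U)(m := \<xi>) \<rparr>"
| U_conj: "U_of \<psi> U1 \<Longrightarrow> U_of \<theta> U2 \<Longrightarrow> Ev U1 \<inter> Ev U2 = {0, -1} \<Longrightarrow>
    U_of (Conj \<psi> \<theta>)
      \<lparr> Ev = Ev U1 \<union> Ev U2,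
        Acc = (\<lambda>j. underQ (Acc U1 j) (Ev U1) \<union> underQ (Acc U2 j) (Ev U2)
                   \<union> {(0, k) | k. (0, k) \<in> Acc U1 j \<union> Acc U2 j \<and> k \<in> (Ev U1 \<union> Ev U2) - {0, -1}}
                   \<union> (if \<not> (\<exists>k. (0, k) \<in> Acc U1 j \<union> Acc U2 j \<and> k \<in> (Ev U1 \<union> Ev U2) - {0, -1})
                      then {(0, -1)} else {})),
        Pre = (\<lambda>e. if e \<in> Ev U1 then Pre U1 e else Pre U2 e) \<rparr>"

end

theory Submission
  imports Defs
begin

lemma sat_fBot[simp]: "\<not> sat M w fBot" by (simp add: fBot_def)
lemma sat_fTop[simp]: "sat M w fTop" by (simp add: fTop_def)

lemma prop_conjuncts: "propositional \<omega> \<Longrightarrow> c \<in> conjuncts \<omega> \<Longrightarrow> \<not> is_Bel c"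
  by (induction \<omega> rule: conjuncts.induct) auto

lemma conjuncts_ne: "conjuncts \<omega> \<noteq> {}"
  by (induction \<omega> rule: conjuncts.induct) auto

lemma U_of_not_prop: "U_of \<psi> U \<Longrightarrow> \<not> propositional \<psi>"
  by (induction rule: U_of.induct) auto

lemma U_of_ConjD: "U_of (Conj a b) U \<Longrightarrow> \<exists>U1. U_of a U1"
  by (cases rule: U_of.cases) auto

definition PR :: "('p, 'ag) fm \<Rightarrow> ('p, 'ag) fm \<Rightarrow> bool" where
  "PR \<omega> p \<longleftrightarrow> (propositional \<omega> \<and> p = \<omega>) \<or> (\<exists>\<xi> \<psi> U. \<omega> = Conj \<xi> \<psi> \<and> propositional \<xi> \<and> U_of \<psi> U \<and> p = \<xi>)
     \<or> ((\<exists>U. U_of \<omega> U) \<and> p = fTop)"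

lemma L:
  assumes "U_of \<phi> U"
  shows "0 \<in> Ev U \<and> -1 \<in> Ev U \<and> Pre U 0 = fTop \<and> Pre U (-1) = fTop
   \<and> (\<forall>j. Acc U j \<subseteq> Ev U \<times> Ev U)
   \<and> (\<forall>j c. (0,c) \<in> Acc U j \<longrightarrow> (c = -1 \<and> (\<forall>\<omega>. Bel j \<omega> \<notin> conjuncts \<phi>))
        \<or> (c \<noteq> 0 \<and> c \<noteq> -1 \<and> (\<exists>\<omega>. Bel j \<omega> \<in> conjuncts \<phi> \<and> PR \<omega> (Pre U c))))
   \<and> (\<forall>j \<omega>. Bel j \<omega> \<in> conjuncts \<phi> \<longrightarrow> (\<exists>c. c \<in> Ev U \<and> c \<noteq> 0 \<and> c \<noteq> -1 \<and> (0,c) \<in> Acc U j \<and> PR \<omega> (Pre U c)))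
   \<and> (\<forall>j. (\<forall>\<omega>. Bel j \<omega> \<notin> conjuncts \<phi>) \<longrightarrow> (0,-1) \<in> Acc U j)"
  using assms
proof (induction rule: U_of.induct)
  case (U_prop \<xi> m i)
  then show ?case apply (simp only: amodel.simps) apply (intro conjI allI impI) apply (auto simp: PR_def split: if_splits) done
next
  case (U_bel \<psi> U m i)
  then show ?case apply (simp only: amodel.simps) apply (intro conjI allI impI) apply (auto simp: PR_def underQ_def split: if_splits) done
next
  case (U_bel_conj \<xi> \<psi> U m i)
  then show ?case apply (simp only: amodel.simps) apply (intro conjI allI impI) apply (auto simp: PR_def underQ_def split: if_splits) done
next
  case (U_conj \<psi> U1 \<theta> U2)
  let ?E = "Ev U1 \<union> Ev U2"
  let ?K = "\<lambda>j k. (0, k) \<in> Acc U1 j \<union> Acc U2 j \<and> k \<in> ?E - {0, - 1}"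
  define V where "V = \<lparr> Ev = Ev U1 \<union> Ev U2,
        Acc = (\<lambda>j. underQ (Acc U1 j) (Ev U1) \<union> underQ (Acc U2 j) (Ev U2)
                   \<union> {(0, k) | k. (0, k) \<in> Acc U1 j \<union> Acc U2 j \<and> k \<in> (Ev U1 \<union> Ev U2) - {0, -1}}
                   \<union> (if \<not> (\<exists>k. (0, k) \<in> Acc U1 j \<union> Acc U2 j \<and> k \<in> (Ev U1 \<union> Ev U2) - {0, -1})
                      then {(0, -1)} else {})),
        Pre = (\<lambda>e. if e \<in> Ev U1 then Pre U1 e else Pre U2 e) \<rparr>"
  have EV: "Ev V = ?E" by (simp add: V_def)
  have PV: "Pre V = (\<lambda>e. if e \<in> Ev U1 then Pre U1 e else Pre U2 e)" by (simp add: V_def)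
  have AV: "Acc V j = underQ (Acc U1 j) (Ev U1) \<union> underQ (Acc U2 j) (Ev U2)
                   \<union> {(0, k) | k. ?K j k} \<union> (if \<not> (\<exists>k. ?K j k) then {(0, -1)} else {})" for j
    by (simp add: V_def)
  have A0: "(0, c) \<in> Acc V j \<longleftrightarrow> ?K j c \<or> (c = -1 \<and> \<not> (\<exists>k. ?K j k))" for j c
    unfolding AV by (auto simp: underQ_def)
  note I1 = U_conj.IH(1) and I2 = U_conj.IH(2)
  have dis: "Ev U1 \<inter> Ev U2 = {0, -1}" by fact
  have conjs: "conjuncts (Conj \<psi> \<theta>) = conjuncts \<psi> \<union> conjuncts \<theta>" by simp
  have P1: "c \<in> Ev U1 \<Longrightarrow> Pre V c = Pre U1 c" for c by (simp add: PV)
  have P2: "c \<in> Ev U2 \<Longrightarrow> c \<noteq> 0 \<Longrightarrow> c \<noteq> -1 \<Longrightarrow> Pre V c = Pre U2 c" for c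
    using dis by (auto simp: PV)
  have a: "0 \<in> Ev V \<and> -1 \<in> Ev V \<and> Pre V 0 = fTop \<and> Pre V (-1) = fTop"
    using I1 by (simp add: EV PV)
  have e: "\<forall>j. Acc V j \<subseteq> Ev V \<times> Ev V"
  proof
    fix j
    have "Acc U1 j \<subseteq> Ev U1 \<times> Ev U1" "Acc U2 j \<subseteq> Ev U2 \<times> Ev U2" using I1 I2 by blast+
    then show "Acc V j \<subseteq> Ev V \<times> Ev V" unfolding AV EV using I1 by (auto simp: underQ_def)
  qed
  have b: "\<forall>j c. (0,c) \<in> Acc V j \<longrightarrow> (c = -1 \<and> (\<forall>\<omega>. Bel j \<omega> \<notin> conjuncts (Conj \<psi> \<theta>)))
        \<or> (c \<noteq> 0 \<and> c \<noteq> -1 \<and> (\<exists>\<omega>. Bel j \<omega> \<in> conjuncts (Conj \<psi> \<theta>) \<and> PR \<omega> (Pre V c)))"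
  proof (intro allI impI)
    fix j c assume "(0,c) \<in> Acc V j"
    then consider "(0, c) \<in> Acc U1 j" "c \<in> ?E - {0,-1}" | "(0, c) \<in> Acc U2 j" "c \<in> ?E - {0,-1}"
      | "c = -1" "\<not> (\<exists>k. ?K j k)" unfolding A0 by blast
    then show "(c = -1 \<and> (\<forall>\<omega>. Bel j \<omega> \<notin> conjuncts (Conj \<psi> \<theta>)))
        \<or> (c \<noteq> 0 \<and> c \<noteq> -1 \<and> (\<exists>\<omega>. Bel j \<omega> \<in> conjuncts (Conj \<psi> \<theta>) \<and> PR \<omega> (Pre V c)))"
    proof cases
      case 1
      have "c \<in> Ev U1" using 1 I1 by blast
      from 1 I1 obtain \<omega> where "Bel j \<omega> \<in> conjuncts \<psi>" "PR \<omega> (Pre U1 c)" by blast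
      with 1 P1[OF \<open>c \<in> Ev U1\<close>] show ?thesis by auto
    next
      case 2
      have "c \<in> Ev U2" using 2 I2 by blast
      from 2 I2 obtain \<omega> where "Bel j \<omega> \<in> conjuncts \<theta>" "PR \<omega> (Pre U2 c)" by blast
      with 2 P2[OF \<open>c \<in> Ev U2\<close>] show ?thesis by auto
    next
      case 3
      have "\<forall>\<omega>. Bel j \<omega> \<notin> conjuncts \<psi>"
      proof (intro allI notI)
        fix \<omega> assume "Bel j \<omega> \<in> conjuncts \<psi>"
        then obtain k where "k \<in> Ev U1" "k \<noteq> 0" "k \<noteq> -1" "(0,k) \<in> Acc U1 j" using I1 by blast
        then show False using 3 by blast
      qed
      moreover have "\<forall>\<omega>. Bel j \<omega> \<notin> conjuncts \<theta>"
      proof (intro allI notI)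
        fix \<omega> assume "Bel j \<omega> \<in> conjuncts \<theta>"
        then obtain k where "k \<in> Ev U2" "k \<noteq> 0" "k \<noteq> -1" "(0,k) \<in> Acc U2 j" using I2 by blast
        then show False using 3 by blast
      qed
      ultimately show ?thesis using 3 by simp
    qed
  qed
  have c: "\<forall>j \<omega>. Bel j \<omega> \<in> conjuncts (Conj \<psi> \<theta>) \<longrightarrow> (\<exists>c. c \<in> Ev V \<and> c \<noteq> 0 \<and> c \<noteq> -1 \<and> (0,c) \<in> Acc V j \<and> PR \<omega> (Pre V c))"
  proof (intro allI impI)
    fix j \<omega> assume "Bel j \<omega> \<in> conjuncts (Conj \<psi> \<theta>)"
    then consider "Bel j \<omega> \<in> conjuncts \<psi>" | "Bel j \<omega> \<in> conjuncts \<theta>" by auto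
    then show "\<exists>c. c \<in> Ev V \<and> c \<noteq> 0 \<and> c \<noteq> -1 \<and> (0,c) \<in> Acc V j \<and> PR \<omega> (Pre V c)"
    proof cases
      case 1
      then obtain k where k: "k \<in> Ev U1" "k \<noteq> 0" "k \<noteq> -1" "(0,k) \<in> Acc U1 j" "PR \<omega> (Pre U1 k)" using I1 by blast
      then show ?thesis using P1[of k] by (intro exI[of _ k]) (auto simp: A0 EV)
    next
      case 2
      then obtain k where k: "k \<in> Ev U2" "k \<noteq> 0" "k \<noteq> -1" "(0,k) \<in> Acc U2 j" "PR \<omega> (Pre U2 k)" using I2 by blast
      then show ?thesis using P2[of k] by (intro exI[of _ k]) (auto simp: A0 EV)
    qed
  qed
  have d: "\<forall>j. (\<forall>\<omega>. Bel j \<omega> \<notin> conjuncts (Conj \<psi> \<theta>)) \<longrightarrow> (0,-1) \<in> Acc V j"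
  proof (intro allI impI)
    fix j assume nb: "\<forall>\<omega>. Bel j \<omega> \<notin> conjuncts (Conj \<psi> \<theta>)"
    have "\<not> (\<exists>k. ?K j k)"
    proof
      assume "\<exists>k. ?K j k"
      then obtain k where k: "(0, k) \<in> Acc U1 j \<union> Acc U2 j" "k \<in> ?E - {0,-1}" by blast
      show False
      proof (cases "(0, k) \<in> Acc U1 j")
        case True
        then have "k \<in> Ev U1" using I1 by blast
        have "\<forall>j c. (0, c) \<in> Acc U1 j \<longrightarrow> c = - 1 \<or> (\<exists>\<omega>. Bel j \<omega> \<in> conjuncts \<psi>)" using I1 by blast
        then show False using True k nb by auto
      next
        case False
        then have "(0, k) \<in> Acc U2 j" using k by blast
        then have "k \<in> Ev U2" using I2 by blast
        have "\<forall>j c. (0, c) \<in> Acc U2 j \<longrightarrow> c = - 1 \<or> (\<exists>\<omega>. Bel j \<omega> \<in> conjuncts \<theta>)" using I2 by blast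
        then show False using \<open>(0, k) \<in> Acc U2 j\<close> k nb by auto
      qed
    qed
    then show "(0,-1) \<in> Acc V j" by (simp add: A0)
  qed
  show ?case using a b c d e unfolding V_def[symmetric] by blast
qed


lemma upd_succ:
  assumes M: "kripke_model M" and v: "v \<in> W M" and U: "U_of \<phi> U"
  shows "sat (update M U v 0) (v,0) (Bel i fBot) \<longleftrightarrow>
    \<not> (\<exists>u c. (v,u) \<in> Rel M i \<and> c \<in> Ev U \<and> (0,c) \<in> Acc U i \<and> sat M u (Pre U c))"
proof -
  have L0: "0 \<in> Ev U" "Pre U 0 = fTop" using L[OF U] by auto
  have v0: "(v,0) \<in> upd_worlds M U v 0"
    by (rule upd_worlds.base) (simp add: Tset_def v L0)
  have RW: "Rel M i \<subseteq> W M \<times> W M" using M by (simp add: kripke_model_def)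
  show ?thesis
  proof
    assume H: "sat (update M U v 0) (v,0) (Bel i fBot)"
    show "\<not> (\<exists>u c. (v,u) \<in> Rel M i \<and> c \<in> Ev U \<and> (0,c) \<in> Acc U i \<and> sat M u (Pre U c))"
    proof
      assume "\<exists>u c. (v,u) \<in> Rel M i \<and> c \<in> Ev U \<and> (0,c) \<in> Acc U i \<and> sat M u (Pre U c)"
      then obtain u c where uc: "(v,u) \<in> Rel M i" "c \<in> Ev U" "(0,c) \<in> Acc U i" "sat M u (Pre U c)" by blast
      have T: "(u,c) \<in> Tset M U" using uc RW by (auto simp: Tset_def)
      have "(u,c) \<in> upd_worlds M U v 0" by (rule upd_worlds.step[OF v0 T uc(1) uc(3)])
      then have "((v,0),(u,c)) \<in> Rel (update M U v 0) i" using v0 uc by (simp add: update_def)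
      then show False using H by simp
    qed
  next
    assume H: "\<not> (\<exists>u c. (v,u) \<in> Rel M i \<and> c \<in> Ev U \<and> (0,c) \<in> Acc U i \<and> sat M u (Pre U c))"
    show "sat (update M U v 0) (v,0) (Bel i fBot)"
    proof -
      have "((v,0),(a,b)) \<notin> Rel (update M U v 0) i" for a b
      proof
        assume "((v,0),(a,b)) \<in> Rel (update M U v 0) i"
        then have ab: "(a,b) \<in> upd_worlds M U v 0" "(v,a) \<in> Rel M i" "(0,b) \<in> Acc U i"
          by (auto simp: update_def)
        have "(a,b) \<in> Tset M U" using ab(1) by (induction rule: upd_worlds.induct) auto
        then show False using H ab by (auto simp: Tset_def)
      qed
      then show ?thesis by auto
    qed
  qed
qed

theorem corollary2:
  fixes \<phi> :: "('p, 'ag::finite) fm" and i :: 'ag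
  assumes agents: "card (UNIV :: 'ag set) \<ge> 2"
    and normal: "dbi_normal \<phi>"
  shows
    "((\<forall>\<omega>. Bel i \<omega> \<in> conjuncts \<phi> \<longrightarrow> (\<forall>c \<in> conjuncts \<omega>. is_Bel c)) \<longrightarrow>
       (\<forall>(M :: ('w, 'ag, 'p) kripke) v U.
          kripke_model M \<longrightarrow> v \<in> W M \<longrightarrow> U_of \<phi> U \<longrightarrow>
          ((\<not> sat M v (Bel i fBot)) \<longleftrightarrow> (\<not> sat (update M U v 0) (v, 0) (Bel i fBot)))))
     \<and>
     (\<forall>\<xi> \<omega>. propositional \<xi> \<longrightarrow> Bel i \<omega> \<in> conjuncts \<phi> \<longrightarrow>
       (\<omega> = \<xi> \<or> (\<exists>\<psi>. \<omega> = Conj \<xi> \<psi> \<and> (\<forall>c \<in> conjuncts \<psi>. is_Bel c))) \<longrightarrow>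
       (\<forall>c \<in> conjuncts \<phi>. c \<noteq> Bel i \<omega> \<longrightarrow> i \<notin> ta c) \<longrightarrow>
       (\<forall>(M :: ('w, 'ag, 'p) kripke) v U.
          kripke_model M \<longrightarrow> v \<in> W M \<longrightarrow> U_of \<phi> U \<longrightarrow>
          (sat M v (Dia i \<xi>) \<longleftrightarrow> (\<not> sat (update M U v 0) (v, 0) (Bel i fBot)))))"
proof (intro conjI impI allI)
  fix M :: "('w, 'ag, 'p) kripke" and v U
  assume hyp: "\<forall>\<omega>. Bel i \<omega> \<in> conjuncts \<phi> \<longrightarrow> (\<forall>c \<in> conjuncts \<omega>. is_Bel c)"
    and M: "kripke_model M" and v: "v \<in> W M" and U: "U_of \<phi> U"
  note LL = L[OF U]
  have RW: "Rel M i \<subseteq> W M \<times> W M" using M by (simp add: kripke_model_def)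
  have pre_top: "Pre U c = fTop" if "c \<in> Ev U" "(0,c) \<in> Acc U i" for c
  proof -
    from LL that consider "c = -1" | \<omega> where "Bel i \<omega> \<in> conjuncts \<phi>" "PR \<omega> (Pre U c)" by blast
    then show ?thesis
    proof cases
      case 1 then show ?thesis using LL by simp
    next
      case 2
      have allB: "\<forall>c \<in> conjuncts \<omega>. is_Bel c" using hyp 2(1) by blast
      have np: "\<not> propositional \<omega>"
        using allB prop_conjuncts conjuncts_ne by blast
      have nc: "\<not> (\<exists>\<xi> \<psi>. \<omega> = Conj \<xi> \<psi> \<and> propositional \<xi>)"
      proof
        assume "\<exists>\<xi> \<psi>. \<omega> = Conj \<xi> \<psi> \<and> propositional \<xi>"
        then obtain \<xi> \<psi> where "\<omega> = Conj \<xi> \<psi>" "propositional \<xi>" by blast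
        moreover obtain d where "d \<in> conjuncts \<xi>" using conjuncts_ne by blast
        ultimately show False using allB prop_conjuncts by fastforce
      qed
      show ?thesis using 2(2) np nc unfolding PR_def by blast
    qed
  qed
  have ex: "\<exists>c. c \<in> Ev U \<and> (0,c) \<in> Acc U i"
  proof (cases "\<exists>\<omega>. Bel i \<omega> \<in> conjuncts \<phi>")
    case True then show ?thesis using LL by blast
  next
    case False then show ?thesis using LL by blast
  qed
  show "(\<not> sat M v (Bel i fBot)) \<longleftrightarrow> (\<not> sat (update M U v 0) (v, 0) (Bel i fBot))"
    unfolding upd_succ[OF M v U] using ex pre_top RW by auto
next
  fix \<xi> \<omega> and M :: "('w, 'ag, 'p) kripke" and v U
  assume px: "propositional \<xi>" and bi: "Bel i \<omega> \<in> conjuncts \<phi>"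
    and form: "\<omega> = \<xi> \<or> (\<exists>\<psi>. \<omega> = Conj \<xi> \<psi> \<and> (\<forall>c \<in> conjuncts \<psi>. is_Bel c))"
    and oth: "\<forall>c \<in> conjuncts \<phi>. c \<noteq> Bel i \<omega> \<longrightarrow> i \<notin> ta c"
    and M: "kripke_model M" and v: "v \<in> W M" and U: "U_of \<phi> U"
  note LL = L[OF U]
  have PRx: "p = \<xi>" if "PR \<omega> p" for p
    using form
  proof
    assume e: "\<omega> = \<xi>"
    have "\<not> (\<exists>\<xi>' \<psi> U. \<xi> = Conj \<xi>' \<psi> \<and> U_of \<psi> U)"
      using px U_of_not_prop by fastforce
    moreover have "\<not> (\<exists>U. U_of \<xi> U)" using px U_of_not_prop by blast
    ultimately show ?thesis using that e unfolding PR_def by blast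
  next
    assume "\<exists>\<psi>. \<omega> = Conj \<xi> \<psi> \<and> (\<forall>c \<in> conjuncts \<psi>. is_Bel c)"
    then obtain \<psi> where e: "\<omega> = Conj \<xi> \<psi>" and allB: "\<forall>c \<in> conjuncts \<psi>. is_Bel c" by blast
    have "\<not> propositional \<psi>" using allB prop_conjuncts conjuncts_ne by blast
    then have "\<not> propositional \<omega>" using e by simp
    moreover have "\<not> (\<exists>U. U_of \<omega> U)" using e px U_of_ConjD U_of_not_prop by blast
    ultimately show ?thesis using that e unfolding PR_def by blast
  qed
  have pre_x: "Pre U c = \<xi>" if "c \<in> Ev U" "(0,c) \<in> Acc U i" for c
  proof -
    from LL that bi consider \<omega>' where "Bel i \<omega>' \<in> conjuncts \<phi>" "PR \<omega>' (Pre U c)" by blast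
    then show ?thesis
    proof cases
      case 1
      have "\<omega>' = \<omega>" using oth 1(1) by fastforce
      then show ?thesis using PRx 1(2) by blast
    qed
  qed
  have ex: "\<exists>c. c \<in> Ev U \<and> (0,c) \<in> Acc U i" using LL bi by blast
  show "sat M v (Dia i \<xi>) \<longleftrightarrow> (\<not> sat (update M U v 0) (v, 0) (Bel i fBot))"
    unfolding upd_succ[OF M v U] Dia_def using ex pre_x by auto
qed

end
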